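(* Let $d\ge 2$, let $\rho$ be a density operator on $\mathbb{C}^d$, and let $\{|i_m\rangle\}_{i=1}^d$, $m=1,\dots,M$, be $M$ mutually unbiased orthonormal bases of $\mathbb{C}^d$, with $p_{i_m}=\langle i_m|\rho|i_m\rangle$. Let $K=\left\lfloor\frac{Md}{d+M-1}\right\rfloor$ and $a=\frac{Md}{d+M-1}-K$. Then $$\sum_{m=1}^M H\{p_{i_m};i\}\ge\big(a(K+1)\log_2(K+1)+(1-a)K\log_2K\big)\frac{d+M-1}{d},$$ and the right-hand side equals $$M\log_2K+(K+1)\Big(M-K\frac{d+M-1}{d}\Big)\log_2\Big(1+\frac1K\Big).$$
   Context: Orthonormal bases $\{|i_m\rangle\}_{i=1}^d$, $m=1,\dots,M$, of $\mathbb{C}^d$ are mutually unbiased if $|\langle i_m|j_n\rangle|^2=1/d$ for all $i,j$ and all $m\ne n$. $H\{p_{i_m};i\}=-\sum_{i=1}^d p_{i_m}\log_2 p_{i_m}$ (with $0\log_2 0=0$) is the Shannon entropy of the outcome distribution in the $m$th basis. *)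

theory Defs
  imports Complex_Main
begin

text \<open>Vectors of C^d are functions nat => complex (only indices k < d matter);
  operators on C^d are functions nat => nat => complex (entries (k,l), k,l < d).\<close>

definition cinner :: "nat \<Rightarrow> (nat \<Rightarrow> complex) \<Rightarrow> (nat \<Rightarrow> complex) \<Rightarrow> complex" where
  "cinner d u v = (\<Sum>k<d. cnj (u k) * v k)"

definition op_apply :: "nat \<Rightarrow> (nat \<Rightarrow> nat \<Rightarrow> complex) \<Rightarrow> (nat \<Rightarrow> complex) \<Rightarrow> (nat \<Rightarrow> complex)" where
  "op_apply d A v = (\<lambda>k. \<Sum>l<d. A k l * v l)"

definition density_operator :: "nat \<Rightarrow> (nat \<Rightarrow> nat \<Rightarrow> complex) \<Rightarrow> bool" where
  "density_operator d \<rho> \<longleftrightarrow>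
     (\<forall>k<d. \<forall>l<d. \<rho> l k = cnj (\<rho> k l)) \<and>
     (\<forall>v. 0 \<le> Re (cinner d v (op_apply d \<rho> v))) \<and>
     (\<Sum>k<d. \<rho> k k) = 1"

text \<open>d orthonormal vectors b 0, ..., b (d-1) of C^d (automatically a basis).\<close>
definition orthonormal_basis :: "nat \<Rightarrow> (nat \<Rightarrow> nat \<Rightarrow> complex) \<Rightarrow> bool" where
  "orthonormal_basis d b \<longleftrightarrow>
     (\<forall>i<d. \<forall>j<d. cinner d (b i) (b j) = (if i = j then 1 else 0))"

text \<open>B m i is the i-th vector of the m-th basis (m < M, i < d).\<close>
definition mutually_unbiased :: "nat \<Rightarrow> nat \<Rightarrow> (nat \<Rightarrow> nat \<Rightarrow> nat \<Rightarrow> complex) \<Rightarrow> bool" where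
  "mutually_unbiased d M B \<longleftrightarrow>
     (\<forall>m<M. orthonormal_basis d (B m)) \<and>
     (\<forall>m<M. \<forall>n<M. m \<noteq> n \<longrightarrow>
        (\<forall>i<d. \<forall>j<d. (cmod (cinner d (B m i) (B n j)))\<^sup>2 = 1 / real d))"

definition shannon_entropy :: "nat \<Rightarrow> (nat \<Rightarrow> real) \<Rightarrow> real" where
  "shannon_entropy d p = - (\<Sum>i<d. if p i = 0 then 0 else p i * log 2 (p i))"

end

theory Submission
  imports Defs "HOL-Analysis.Analysis" "HOL-Library.Multiset" "Jordan_Normal_Form.Determinant"
begin


definition Lk :: "nat \<Rightarrow> real" where "Lk K = ln (real K + 1) - ln (real K)"
definition al :: "nat \<Rightarrow> real" where "al K = (real K + 1) * ln (real K + 1) - real K * ln (real K)"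
definition be :: "nat \<Rightarrow> real" where "be K = - (real K * (real K + 1) * Lk K)"
definition ph :: "nat \<Rightarrow> real \<Rightarrow> real" where "ph K x = - x * ln x - al K * x - be K * x^2"
definition dph :: "nat \<Rightarrow> real \<Rightarrow> real" where "dph K x = - ln x - 1 - al K - 2 * be K * x"

lemma ln_lt_minus_one: fixes u :: real assumes "0 < u" "u < 1" shows "ln u < u - 1"
proof -
  have s: "0 < sqrt u" "sqrt u < 1" using assms by auto
  have "ln u = 2 * ln (sqrt u)" using assms by (simp add: ln_sqrt)
  also have "\<dots> \<le> 2 * (sqrt u - 1)" using ln_le_minus_one[OF s(1)] by simp
  also have "\<dots> < u - 1"
  proof -
    have "(sqrt u - 1)^2 > 0" using s by simp
    then show ?thesis using assms by (simp add: power2_eq_square algebra_simps)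
  qed
  finally show ?thesis .
qed

context fixes K :: nat assumes K1: "K \<ge> 1"
begin

lemma Kpos: "real K > 0" using K1 by simp

lemma Lk_eq: "Lk K = - ln (real K / (real K + 1))"
  unfolding Lk_def using Kpos by (simp add: ln_div)

lemma Lk_bounds: "real K * Lk K < 1" "1 < (real K + 1) * Lk K"
proof -
  have Kp: "real K > 0" by (rule Kpos)
  have eq: "Lk K = ln (1 + 1 / real K)"
  proof -
    have "1 + 1 / real K = (real K + 1) / real K" using Kp by (simp add: field_simps)
    then show ?thesis unfolding Lk_def using Kp by (simp add: ln_div)
  qed
  have "ln (1 + 1 / real K) < 1 / real K"
    using Kp by (intro ln_add_one_self_less_self) auto
  then show "real K * Lk K < 1" using Kp eq by (simp add: field_simps)
  have "ln (real K / (real K + 1)) < real K / (real K + 1) - 1"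
    using Kp by (intro ln_lt_minus_one) auto
  also have "real K / (real K + 1) - 1 = - 1 / (real K + 1)" using Kp by (simp add: field_simps)
  finally have "Lk K > 1 / (real K + 1)" using Lk_eq by simp
  then show "1 < (real K + 1) * Lk K" using Kp by (simp add: field_simps)
qed

lemma Lk_pos: "Lk K > 0" using Lk_bounds(2) Kpos
  by (smt (verit, best) mult_nonneg_nonpos of_nat_0_le_iff)

lemma twoKL: "2 * real K * Lk K > 1"
proof -
  have "1 < (real K + 1) * Lk K" by (rule Lk_bounds(2))
  moreover have "real K + 1 \<le> 2 * real K" using K1 by simp
  ultimately show ?thesis using Lk_pos
    by (smt (verit, best) mult_right_mono)
qed


lemma be_neg: "be K < 0" unfolding be_def using Kpos Lk_pos by simp

lemma ln_ge_one_minus_inv: fixes t :: real assumes "t > 0" shows "ln t \<ge> 1 - 1 / t"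
proof -
  have "ln (1/t) \<le> 1/t - 1" using assms by (intro ln_le_minus_one) auto
  then show ?thesis using assms by (simp add: ln_div)
qed

lemma ph_a: "ph K (1 / real K) = 0"
proof -
  have "ln (1 / real K) = - ln (real K)" using Kpos by (simp add: ln_div)
  then show ?thesis unfolding ph_def al_def be_def Lk_def using Kpos
    by (simp add: field_simps power2_eq_square)
qed

lemma ph_b: "ph K (1 / (real K + 1)) = 0"
proof -
  have "ln (1 / (real K + 1)) = - ln (real K + 1)" using Kpos by (simp add: ln_div)
  then show ?thesis unfolding ph_def al_def be_def Lk_def using Kpos
    by (simp add: field_simps power2_eq_square)
qed

lemma dph_a: "dph K (1 / real K) > 0"
proof -
  have "ln (1 / real K) = - ln (real K)" using Kpos by (simp add: ln_div)
  then have "dph K (1 / real K) = (real K + 1) * Lk K - 1"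
    unfolding dph_def al_def be_def Lk_def using Kpos
    by (simp add: field_simps power2_eq_square)
  then show ?thesis using Lk_bounds by simp
qed

lemma dph_b: "dph K (1 / (real K + 1)) < 0"
proof -
  have "ln (1 / (real K + 1)) = - ln (real K + 1)" using Kpos by (simp add: ln_div)
  then have "dph K (1 / (real K + 1)) = real K * Lk K - 1"
    unfolding dph_def al_def be_def Lk_def using Kpos
    by (simp add: field_simps power2_eq_square)
  then show ?thesis using Lk_bounds by simp
qed

lemma ph_deriv: "x > 0 \<Longrightarrow> (ph K has_real_derivative dph K x) (at x)"
  unfolding ph_def dph_def
  by (rule derivative_eq_intros refl | simp)+

lemma dph_deriv: "x > 0 \<Longrightarrow> (dph K has_real_derivative (- 1 / x - 2 * be K)) (at x)"
  unfolding dph_def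
  by (auto intro!: derivative_eq_intros)

lemma ph_convex: "convex_on {-1 / (2 * be K)..} (ph K)"
proof (rule f''_ge0_imp_convex)
  have x0p: "-1 / (2 * be K) > 0" using be_neg by (simp add: field_simps)
  fix x assume "x \<in> {-1 / (2 * be K)..}"
  then have x: "x \<ge> -1 / (2 * be K)" by simp
  then have xp: "x > 0" using x0p by linarith
  show "(ph K has_real_derivative dph K x) (at x)" using ph_deriv xp by blast
  show "(dph K has_real_derivative (- 1 / x - 2 * be K)) (at x)" using dph_deriv xp by blast
  have "1 / x \<le> - 2 * be K" using x xp be_neg by (simp add: field_simps)
  then show "0 \<le> - 1 / x - 2 * be K" by simp
qed simp

lemma ph_tangent:
  assumes "x \<ge> -1 / (2 * be K)" "c > -1 / (2 * be K)"
  shows "ph K x \<ge> ph K c + dph K c * (x - c)"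
proof -
  have x0p: "-1 / (2 * be K) > 0" using be_neg by (simp add: field_simps)
  have cp: "c > 0" using assms x0p by linarith
  have "ph K x - ph K c \<ge> dph K c * (x - c)"
    apply (rule convex_on_imp_above_tangent[OF ph_convex])
    using assms x0p cp by (auto intro!: has_field_derivative_at_within ph_deriv simp del: minus_divide_left)
  then show ?thesis by simp
qed

lemma ph_nonneg: assumes "0 < x" "x \<le> 1 / (real K + 1)" shows "ph K x \<ge> 0"
proof -
  let ?g = "\<lambda>x. - ln x - al K - be K * x"
  have "?g x \<ge> ?g (1 / (real K + 1))"
  proof (rule DERIV_nonpos_imp_nonincreasing[of x "1 / (real K + 1)" ?g])
    fix y assume y: "x \<le> y" "y \<le> 1 / (real K + 1)"
    then have yp: "y > 0" using assms by simp
    show "\<exists>D. (?g has_real_derivative D) (at y) \<and> D \<le> 0"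
    proof (intro exI conjI)
      show "(?g has_real_derivative (- 1 / y - be K)) (at y)"
        by (rule derivative_eq_intros refl | use yp in simp)+
      have "1 / y \<ge> real K + 1" using y yp Kpos by (simp add: field_simps)
      moreover have "- be K = real K * (real K + 1) * Lk K" unfolding be_def by simp
      moreover have "real K * (real K + 1) * Lk K \<le> real K + 1"
        using Lk_bounds(1) Kpos by (simp add: mult.commute mult_left_le)
      ultimately show "- 1 / y - be K \<le> 0"
        by (smt (verit, best) Kpos divide_minus_left mult_le_cancel_left2 mult_nonneg_nonneg of_nat_0_le_iff)
    qed
  qed (use assms in auto)
  moreover have "?g (1 / (real K + 1)) = 0"
  proof -
    have "ph K (1 / (real K + 1)) = (1 / (real K + 1)) * ?g (1 / (real K + 1))"
      unfolding ph_def by (simp add: algebra_simps power2_eq_square)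
    then show ?thesis using ph_b Kpos by simp
  qed
  ultimately have "?g x \<ge> 0" by simp
  then have "x * ?g x \<ge> 0" using assms by simp
  then show ?thesis unfolding ph_def by (simp add: algebra_simps power2_eq_square)
qed

lemma ph_merge: assumes "x > 0" "y > 0" "x + y \<le> - 1 / be K"
  shows "ph K x + ph K y \<ge> ph K (x + y)"
proof -
  have e: "ph K x + ph K y - ph K (x + y) = x * ln ((x+y)/x) + y * ln ((x+y)/y) + 2 * be K * x * y"
    unfolding ph_def using assms by (simp add: ln_div algebra_simps power2_eq_square)
  have 1: "x * ln ((x+y)/x) \<ge> x * (1 - x/(x+y))"
    using ln_ge_one_minus_inv[of "(x+y)/x"] assms by (intro mult_left_mono) auto
  have 2: "y * ln ((x+y)/y) \<ge> y * (1 - y/(x+y))"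
    using ln_ge_one_minus_inv[of "(x+y)/y"] assms by (intro mult_left_mono) auto
  have 3: "x * (1 - x/(x+y)) + y * (1 - y/(x+y)) = 2 * x * y / (x + y)"
  proof -
    have a: "x * (1 - x/(x+y)) = x * y / (x+y)" using assms by (simp add: field_simps)
    have b: "y * (1 - y/(x+y)) = x * y / (x+y)" using assms by (simp add: field_simps)
    show ?thesis unfolding a b by (simp add: field_simps)
  qed
  have "1 / (x + y) \<ge> - be K" using assms be_neg by (simp add: field_simps)
  then have "2 * x * y * (1 / (x + y)) \<ge> 2 * x * y * (- be K)"
    using assms by (intro mult_left_mono) auto
  then have "2 * x * y / (x + y) + 2 * be K * x * y \<ge> 0" by (simp add: algebra_simps)
  then show ?thesis using e 1 2 3 by linarith
qed


definition "ff e = ph K e + real K * ph K ((1 - e) / real K)"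
definition "fd e = - ln e + ln ((1 - e) / real K) - 2 * be K * e + 2 * be K * (1 - e) / real K"
definition "fdd e = - 1 / e - 1 / (1 - e) - 2 * be K - 2 * be K / real K"
definition "fddd (e::real) = 1 / e^2 - 1 / (1 - e)^2"

lemma ff_deriv: assumes "0 < e" "e < 1" shows "(ff has_real_derivative fd e) (at e)"
proof -
  have yp: "(1 - e) / real K > 0" using assms Kpos by simp
  have d2: "((\<lambda>e. (1 - e) / real K) has_real_derivative (- 1 / real K)) (at e)"
    using Kpos by (auto intro!: derivative_eq_intros)
  have d3: "((\<lambda>e. ph K ((1 - e) / real K)) has_real_derivative dph K ((1 - e) / real K) * (- 1 / real K)) (at e)"
    by (rule DERIV_chain'[OF d2 ph_deriv[OF yp]])
  have "(ff has_real_derivative dph K e + real K * (dph K ((1 - e) / real K) * (- 1 / real K))) (at e)"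
    unfolding ff_def[abs_def] by (intro DERIV_add ph_deriv assms DERIV_cmult d3)
  moreover have "dph K e + real K * (dph K ((1 - e) / real K) * (- 1 / real K)) = fd e"
    unfolding dph_def fd_def using Kpos by (simp add: field_simps)
  ultimately show ?thesis by simp
qed

lemma fd_deriv: assumes "0 < e" "e < 1" shows "(fd has_real_derivative fdd e) (at e)"
proof -
  have yp: "(1 - e) / real K > 0" using assms Kpos by simp
  have "(fd has_real_derivative (- 1 / e + (1 / ((1 - e) / real K)) * (- 1 / real K)
      - 2 * be K * 1 + 2 * be K * (- 1) / real K)) (at e)"
    unfolding fd_def[abs_def] using assms yp Kpos
    by (intro derivative_intros DERIV_chain'[of "\<lambda>e. (1 - e) / real K" _ _ _ ln]) 
       (auto intro!: derivative_eq_intros)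
  moreover have "(- 1 / e + (1 / ((1 - e) / real K)) * (- 1 / real K)
      - 2 * be K * 1 + 2 * be K * (- 1) / real K) = fdd e"
    unfolding fdd_def using assms Kpos by (simp add: field_simps)
  ultimately show ?thesis by simp
qed

lemma fdd_deriv: assumes "0 < e" "e < 1" shows "(fdd has_real_derivative fddd e) (at e)"
proof -
  have "(fdd has_real_derivative (1 / e^2 - 1 / (1 - e)^2)) (at e)"
    unfolding fdd_def[abs_def] using assms
    by (auto intro!: derivative_eq_intros simp: field_simps power2_eq_square)
  then show ?thesis unfolding fddd_def .
qed

lemma fd_convex: "convex_on {0<..1/2} fd"
proof (rule f''_ge0_imp_convex)
  fix x :: real assume x: "x \<in> {0<..1/2}"
  then show "(fd has_real_derivative fdd x) (at x)" by (intro fd_deriv) auto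
  from x show "(fdd has_real_derivative fddd x) (at x)" by (intro fdd_deriv) auto
  from x have "x^2 \<le> (1 - x)^2" by (intro power_mono) auto
  then have "1 / (1 - x)^2 \<le> 1 / x^2" using x by (intro divide_left_mono) auto
  then show "0 \<le> fddd x" unfolding fddd_def by simp
qed simp

lemma fd_b: "fd (1 / (real K + 1)) = 0"
proof -
  have "real K * real K > 0" using Kpos by simp
  then have nz: "real K + real K * real K \<noteq> 0" using Kpos by linarith
  have "(1 - 1 / (real K + 1)) / real K = 1 / (real K + 1)" using Kpos nz by (simp add: field_simps)
  moreover have "fd (1 / (real K + 1)) = - ln (1 / (real K + 1)) + ln ((1 - 1 / (real K + 1)) / real K)
     - 2 * be K * (1 / (real K + 1)) + 2 * be K * ((1 - 1 / (real K + 1)) / real K)"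
    unfolding fd_def by simp
  ultimately show ?thesis by simp
qed

lemma ff_b: "ff (1 / (real K + 1)) = 0"
proof -
  have "real K * real K > 0" using Kpos by simp
  then have nz: "real K + real K * real K \<noteq> 0" using Kpos by linarith
  have "(1 - 1 / (real K + 1)) / real K = 1 / (real K + 1)" using Kpos nz by (simp add: field_simps)
  then show ?thesis unfolding ff_def using ph_b by simp
qed

definition "GG t = - (1 - t) * ln ((1 - t) / real K) - al K - be K * (t^2 + (1 - t)^2 / real K)"

lemma ff_GG: assumes "0 < t" "t \<le> 1" shows "ff t \<ge> GG t"
proof -
  have "ff t = - t * ln t + GG t"
    unfolding ff_def GG_def ph_def using Kpos by (simp add: field_simps power2_eq_square)
  moreover have "t * ln t \<le> 0" using assms by (simp add: mult_nonneg_nonpos)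
  ultimately show ?thesis by simp
qed

lemma GG_0: "GG 0 = 0"
proof -
  have "ph K (1 / real K) = GG 0 / real K"
    unfolding GG_def ph_def using Kpos by (simp add: field_simps power2_eq_square ln_div)
  then show ?thesis using ph_a Kpos by simp
qed

lemma GG_cont: "isCont GG 0"
  unfolding GG_def[abs_def] using Kpos by (auto intro!: continuous_intros)

lemma ff_nonneg: assumes "0 < z" "z \<le> 1 / (real K + 1)" shows "ff z \<ge> 0"
proof -
  define b where "b = 1 / (real K + 1)"
  have b12: "b \<le> 1/2" unfolding b_def using Kpos by (simp add: field_simps)
  have bp: "b > 0" unfolding b_def using Kpos by simp
  have zb: "z \<le> b" using assms b_def by simp
  show ?thesis
  proof (cases "\<exists>t. 0 < t \<and> t \<le> z \<and> fd t < 0")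
    case True
    then obtain t where t: "0 < t" "t \<le> z" "fd t < 0" by blast
    have neg: "fd s \<le> 0" if s: "z \<le> s" "s \<le> b" for s
    proof (cases "s = b")
      case True then show ?thesis using fd_b b_def by simp
    next
      case False
      then have sb: "s < b" using s by simp
      have cv: "convex_on {t..b} fd"
        by (rule convex_on_subset[OF fd_convex]) (use t b12 in auto)
      have "fd s \<le> (fd b - fd t) / (b - t) * (s - t) + fd t"
        by (rule convex_onD_Icc'[OF cv]) (use s t sb in auto)
      also have "\<dots> = fd t * ((b - s) / (b - t))"
      proof -
        have "fd b = 0" using fd_b b_def by simp
        then show ?thesis using sb t s by (simp add: field_simps)
      qed
      also have "\<dots> \<le> 0" using t s sb by (intro mult_nonpos_nonneg) auto
      finally show ?thesis .
    qed
    have "ff z \<ge> ff b"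
    proof (rule DERIV_nonpos_imp_nonincreasing[of z b ff])
      fix x assume x: "z \<le> x" "x \<le> b"
      show "\<exists>y. (ff has_real_derivative y) (at x) \<and> y \<le> 0"
        using ff_deriv[of x] neg[OF x] x assms b12 by auto
    qed (use zb in auto)
    then show ?thesis using ff_b b_def by simp
  next
    case False
    then have pos: "fd t \<ge> 0" if "0 < t" "t \<le> z" for t using that by force
    have mono: "ff t \<le> ff z" if t: "0 < t" "t \<le> z" for t
    proof (rule DERIV_nonneg_imp_nondecreasing[of t z ff])
      fix x assume x: "t \<le> x" "x \<le> z"
      show "\<exists>y. (ff has_real_derivative y) (at x) \<and> y \<ge> 0"
        using ff_deriv[of x] pos[of x] x t zb b12 by auto
    qed (use t in auto)
    show ?thesis
    proof (rule ccontr)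
      assume "\<not> ff z \<ge> 0"
      then have fz: "- ff z > 0" by simp
      from GG_cont[unfolded isCont_def LIM_eq] fz obtain r where
        r: "r > 0" "\<And>x. x \<noteq> 0 \<and> norm (x - 0) < r \<Longrightarrow> norm (GG x - GG 0) < - ff z"
        by blast
      define t where "t = min z (r/2)"
      have t: "0 < t" "t \<le> z" "t < r" unfolding t_def using r assms by auto
      have "norm (GG t - GG 0) < - ff z" using r(2)[of t] t by auto
      then have "GG t > ff z" using GG_0 by simp
      moreover have "GG t \<le> ff t" using ff_GG[of t] t zb b12 by simp
      moreover have "ff t \<le> ff z" using mono t by simp
      ultimately show False by simp
    qed
  qed
qed

lemma x0_lt_b: "-1 / (2 * be K) < 1 / (real K + 1)"
proof -
  have "- (2 * be K) = 2 * real K * Lk K * (real K + 1)" unfolding be_def by simp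
  also have "\<dots> > real K + 1" using twoKL Kpos by simp
  finally have "- (2 * be K) > real K + 1" .
  then show ?thesis using Kpos be_neg by (simp add: field_simps)
qed

lemma x0_pos: "-1 / (2 * be K) > 0" using be_neg by (simp add: field_simps)

lemma tangent_sum:
  assumes "\<forall>y\<in>#R. y \<ge> -1 / (2 * be K)" "c > -1 / (2 * be K)"
  shows "sum_mset (image_mset (ph K) R) \<ge> real (size R) * ph K c + dph K c * (sum_mset R - real (size R) * c)"
proof -
  have "sum_mset (image_mset (ph K) R) \<ge> sum_mset (image_mset (\<lambda>y. ph K c + dph K c * (y - c)) R)"
    using assms ph_tangent by (intro sum_mset_mono) auto
  moreover have "sum_mset (image_mset (\<lambda>y. ph K c + dph K c * (y - c)) R)
     = real (size R) * ph K c + dph K c * (sum_mset R - real (size R) * c)"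
    by (induction R) (auto simp: algebra_simps)
  ultimately show ?thesis by simp
qed

lemma main_mset:
  assumes "\<forall>x\<in>#Q. x > 0" "sum_mset Q = 1"
  shows "sum_mset (image_mset (ph K) Q) \<ge> 0"
  using assms
proof (induction "size Q" arbitrary: Q rule: less_induct)
  case less
  define x0 where "x0 = -1 / (2 * be K)"
  have x0b: "x0 < 1 / (real K + 1)" using x0_lt_b x0_def by simp
  have x0p: "x0 > 0" using x0_pos x0_def by simp
  have ba: "1 / (real K + 1) < 1 / real K" using Kpos by (simp add: field_simps)
  show ?case
  proof (cases "\<exists>x y R. Q = add_mset x (add_mset y R) \<and> x + y \<le> - 1 / be K")
    case True
    then obtain x y R where Q: "Q = add_mset x (add_mset y R)" and xy: "x + y \<le> - 1 / be K" by blast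
    let ?Q = "add_mset (x + y) R"
    have "size ?Q < size Q" using Q by simp
    moreover have "\<forall>x\<in>#?Q. x > 0" using less.prems Q by auto
    moreover have "sum_mset ?Q = 1" using less.prems Q by (simp add: algebra_simps)
    ultimately have IH: "sum_mset (image_mset (ph K) ?Q) \<ge> 0" using less.hyps by blast
    have "ph K x + ph K y \<ge> ph K (x + y)" using ph_merge xy less.prems Q by auto
    then show ?thesis using IH Q by (simp add: algebra_simps)
  next
    case False
    then have nomerge: "\<And>x y R. Q = add_mset x (add_mset y R) \<Longrightarrow> x + y > - 1 / be K" by force
    show ?thesis
    proof (cases "\<forall>x\<in>#Q. x \<ge> x0")
      case True
      show ?thesis
      proof (cases "size Q \<le> K")
        case True
        have t: "sum_mset (image_mset (ph K) Q) \<ge> real (size Q) * ph K (1 / real K)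
            + dph K (1 / real K) * (sum_mset Q - real (size Q) * (1 / real K))"
          by (rule tangent_sum) (use \<open>\<forall>x\<in>#Q. x \<ge> x0\<close> x0_def x0b ba in auto)
        have "real (size Q) * (1 / real K) \<le> 1" using True Kpos by (simp add: field_simps)
        then have "sum_mset Q - real (size Q) * (1 / real K) \<ge> 0" using less.prems by simp
        then have "dph K (1 / real K) * (sum_mset Q - real (size Q) * (1 / real K)) \<ge> 0"
          using dph_a by simp
        then show ?thesis using t ph_a by simp
      next
        case False
        have t: "sum_mset (image_mset (ph K) Q) \<ge> real (size Q) * ph K (1 / (real K + 1))
            + dph K (1 / (real K + 1)) * (sum_mset Q - real (size Q) * (1 / (real K + 1)))"
          by (rule tangent_sum) (use \<open>\<forall>x\<in>#Q. x \<ge> x0\<close> x0_def x0b in auto)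
        have "real (size Q) * (1 / (real K + 1)) \<ge> 1" using False Kpos by (simp add: field_simps)
        then have "sum_mset Q - real (size Q) * (1 / (real K + 1)) \<le> 0" using less.prems by simp
        then have "dph K (1 / (real K + 1)) * (sum_mset Q - real (size Q) * (1 / (real K + 1))) \<ge> 0"
          using dph_b by (simp add: mult_nonpos_nonpos)
        then show ?thesis using t ph_b by simp
      qed
    next
      case False
      then obtain e where e: "e \<in># Q" "e < x0" by auto
      define R where "R = Q - {#e#}"
      have Q: "Q = add_mset e R" unfolding R_def using e by simp
      have ep: "e > 0" using e less.prems by auto
      have Rge: "\<forall>y\<in>#R. y \<ge> x0"
      proof
        fix y assume y: "y \<in># R"
        show "y \<ge> x0"
        proof (rule ccontr)
          assume "\<not> y \<ge> x0"
          then have "e + y < - 1 / be K" using e x0_def be_neg by (simp add: field_simps)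
          moreover have "Q = add_mset e (add_mset y (R - {#y#}))" using Q y by simp
          ultimately show False using nomerge by fastforce
        qed
      qed
      have sR: "sum_mset R = 1 - e" using less.prems Q by simp
      have phe: "ph K e \<ge> 0" using ph_nonneg[of e] ep e x0b by simp
      have tot: "sum_mset (image_mset (ph K) Q) = ph K e + sum_mset (image_mset (ph K) R)"
        using Q by simp
      consider "size R < K" | "size R > K" | "size R = K" by linarith
      then show ?thesis
      proof cases
        case 1
        have t: "sum_mset (image_mset (ph K) R) \<ge> real (size R) * ph K (1 / real K)
            + dph K (1 / real K) * (sum_mset R - real (size R) * (1 / real K))"
          by (rule tangent_sum) (use Rge x0_def x0b ba in auto)
        have "real (size R) \<le> real K - 1" using 1 by linarith
        then have "real (size R) * (1 / real K) \<le> (real K - 1) / real K"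
          using Kpos by (simp add: divide_right_mono)
        moreover have "(real K - 1) / real K = 1 - 1 / real K" using Kpos by (simp add: field_simps)
        moreover have "e < 1 / real K" using e x0b ba by simp
        ultimately have "sum_mset R - real (size R) * (1 / real K) \<ge> 0" using sR by simp
        then have "dph K (1 / real K) * (sum_mset R - real (size R) * (1 / real K)) \<ge> 0"
          using dph_a by simp
        then have "sum_mset (image_mset (ph K) R) \<ge> 0" using t ph_a by simp
        then show ?thesis using tot phe by simp
      next
        case 2
        have t: "sum_mset (image_mset (ph K) R) \<ge> real (size R) * ph K (1 / (real K + 1))
            + dph K (1 / (real K + 1)) * (sum_mset R - real (size R) * (1 / (real K + 1)))"
          by (rule tangent_sum) (use Rge x0_def x0b in auto)
        have "real (size R) * (1 / (real K + 1)) \<ge> 1" using 2 Kpos by (simp add: field_simps)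
        then have "sum_mset R - real (size R) * (1 / (real K + 1)) \<le> 0" using sR ep by linarith
        then have "dph K (1 / (real K + 1)) * (sum_mset R - real (size R) * (1 / (real K + 1))) \<ge> 0"
          using dph_b by (simp add: mult_nonpos_nonpos)
        then have "sum_mset (image_mset (ph K) R) \<ge> 0" using t ph_b by simp
        then show ?thesis using tot phe by simp
      next
        case 3
        define m where "m = (1 - e) / real K"
        have "m > x0"
        proof -
          have "x0 * (real K + 1) < 1" using x0b Kpos by (simp add: field_simps)
          then have "x0 * real K < 1 - e" using e by (simp add: algebra_simps)
          then show ?thesis unfolding m_def using Kpos by (simp add: field_simps)
        qed
        have "sum_mset (image_mset (ph K) R) \<ge> real (size R) * ph K m
            + dph K m * (sum_mset R - real (size R) * m)"
          by (rule tangent_sum) (use Rge x0_def \<open>m > x0\<close> in auto)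
        moreover have "sum_mset R - real (size R) * m = 0" unfolding m_def using sR 3 Kpos by simp
        ultimately have "sum_mset (image_mset (ph K) R) \<ge> real K * ph K m" using 3 by simp
        moreover have "ff e \<ge> 0" using ff_nonneg[of e] ep e x0b by simp
        ultimately show ?thesis using tot unfolding ff_def m_def by simp
      qed
    qed
  qed
qed

end



lemma onb_complete:
  assumes "orthonormal_basis d b" "k < d" "l < d"
  shows "(\<Sum>i<d. b i k * cnj (b i l)) = (if k = l then 1 else 0)"
proof -
  define U :: "complex mat" where "U = mat d d (\<lambda>(k, i). b i k)"
  define V :: "complex mat" where "V = mat d d (\<lambda>(i, k). cnj (b i k))"
  have U: "U \<in> carrier_mat d d" and V: "V \<in> carrier_mat d d" unfolding U_def V_def by auto
  have "V * U = 1\<^sub>m d"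
  proof (rule eq_matI)
    fix i j assume ij: "i < dim_row (1\<^sub>m d)" "j < dim_col (1\<^sub>m d)"
    have "(V * U) $$ (i, j) = (\<Sum>k<d. cnj (b i k) * b j k)"
      using ij U V unfolding U_def V_def
      by (simp add: index_mult_mat scalar_prod_def lessThan_atLeast0)
    also have "\<dots> = cinner d (b i) (b j)" unfolding cinner_def ..
    also have "\<dots> = 1\<^sub>m d $$ (i, j)" using assms(1) ij unfolding orthonormal_basis_def by auto
    finally show "(V * U) $$ (i, j) = 1\<^sub>m d $$ (i, j)" .
  qed (use U V in auto)
  then have "U * V = 1\<^sub>m d" using mat_mult_left_right_inverse[OF V U] by simp
  then have "(U * V) $$ (k, l) = 1\<^sub>m d $$ (k, l)" by simp
  moreover have "(U * V) $$ (k, l) = (\<Sum>i<d. b i k * cnj (b i l))"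
    using assms U V unfolding U_def V_def
    by (simp add: index_mult_mat scalar_prod_def lessThan_atLeast0)
  ultimately show ?thesis using assms by simp
qed

lemma p_sum:
  assumes "density_operator d \<rho>" "orthonormal_basis d b"
  shows "(\<Sum>i<d. Re (cinner d (b i) (op_apply d \<rho> (b i)))) = 1"
proof -
  have "(\<Sum>i<d. cinner d (b i) (op_apply d \<rho> (b i)))
      = (\<Sum>i<d. \<Sum>k<d. \<Sum>l<d. \<rho> k l * (b i l * cnj (b i k)))"
    unfolding cinner_def op_apply_def sum_distrib_left
    by (intro sum.cong refl) (simp add: algebra_simps)
  also have "\<dots> = (\<Sum>k<d. \<Sum>i<d. \<Sum>l<d. \<rho> k l * (b i l * cnj (b i k)))"
    by (rule sum.swap)
  also have "\<dots> = (\<Sum>k<d. \<Sum>l<d. \<Sum>i<d. \<rho> k l * (b i l * cnj (b i k)))"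
    by (rule sum.cong[OF refl], rule sum.swap)
  also have "\<dots> = (\<Sum>k<d. \<Sum>l<d. \<rho> k l * (\<Sum>i<d. b i l * cnj (b i k)))"
    by (simp add: sum_distrib_left)
  also have "\<dots> = (\<Sum>k<d. \<Sum>l<d. \<rho> k l * (if l = k then 1 else 0))"
  proof (intro sum.cong refl)
    fix k l assume "k \<in> {..<d}" "l \<in> {..<d}"
    then show "\<rho> k l * (\<Sum>i<d. b i l * cnj (b i k)) = \<rho> k l * (if l = k then 1 else 0)"
      using onb_complete[OF assms(2), of l k] by simp
  qed
  also have "\<dots> = (\<Sum>k<d. \<rho> k k)"
  proof (rule sum.cong[OF refl])
    fix k assume k: "k \<in> {..<d}"
    have "(\<Sum>l<d. \<rho> k l * (if l = k then 1 else 0)) = (\<Sum>l<d. if l = k then \<rho> k k else 0)"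
      by (rule sum.cong) auto
    also have "\<dots> = \<rho> k k" using k by (subst sum.delta) auto
    finally show "(\<Sum>l<d. \<rho> k l * (if l = k then 1 else 0)) = \<rho> k k" .
  qed
  also have "\<dots> = 1" using assms(1) unfolding density_operator_def by blast
  finally have "(\<Sum>i<d. cinner d (b i) (op_apply d \<rho> (b i))) = 1" .
  then have "Re (\<Sum>i<d. cinner d (b i) (op_apply d \<rho> (b i))) = 1" by simp
  then show ?thesis by (simp add: Re_sum)
qed

definition hs :: "nat \<Rightarrow> (nat \<Rightarrow> nat \<Rightarrow> complex) \<Rightarrow> (nat \<Rightarrow> nat \<Rightarrow> complex) \<Rightarrow> real" where
  "hs d A C = Re (\<Sum>k<d. \<Sum>l<d. cnj (A k l) * C k l)"

lemma hs_sym: "hs d A C = hs d C A"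
proof -
  have "(\<Sum>k<d. \<Sum>l<d. cnj (C k l) * A k l) = cnj (\<Sum>k<d. \<Sum>l<d. cnj (A k l) * C k l)"
    by (simp add: mult.commute)
  then show ?thesis unfolding hs_def by simp
qed

lemma hs_diff_left: "hs d (\<lambda>k l. A k l - B k l) C = hs d A C - hs d B C"
  unfolding hs_def by (simp add: algebra_simps sum_subtractf)

lemma hs_scale_left: "hs d (\<lambda>k l. complex_of_real r * A k l) C = r * hs d A C"
proof -
  have "(\<Sum>k<d. \<Sum>l<d. cnj (complex_of_real r * A k l) * C k l)
      = complex_of_real r * (\<Sum>k<d. \<Sum>l<d. cnj (A k l) * C k l)"
    by (simp add: sum_distrib_left mult_ac)
  then show ?thesis unfolding hs_def by simp
qed

lemma hs_sum_left: "finite J \<Longrightarrow> hs d (\<lambda>k l. \<Sum>j\<in>J. F j k l) C = (\<Sum>j\<in>J. hs d (F j) C)"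
proof -
  assume J: "finite J"
  have "(\<Sum>k<d. \<Sum>l<d. cnj (\<Sum>j\<in>J. F j k l) * C k l)
      = (\<Sum>k<d. \<Sum>l<d. \<Sum>j\<in>J. cnj (F j k l) * C k l)"
    by (simp add: sum_distrib_right)
  also have "\<dots> = (\<Sum>k<d. \<Sum>j\<in>J. \<Sum>l<d. cnj (F j k l) * C k l)"
    by (rule sum.cong[OF refl], rule sum.swap)
  also have "\<dots> = (\<Sum>j\<in>J. \<Sum>k<d. \<Sum>l<d. cnj (F j k l) * C k l)"
    by (rule sum.swap)
  finally show ?thesis unfolding hs_def by (simp add: Re_sum)
qed

lemma hs_self_nonneg: "hs d A A \<ge> 0"
proof -
  have "(\<Sum>k<d. \<Sum>l<d. cnj (A k l) * A k l) = complex_of_real (\<Sum>k<d. \<Sum>l<d. (cmod (A k l))\<^sup>2)"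
    by (simp add: complex_norm_square mult.commute del: of_real_power)
  then show ?thesis unfolding hs_def by (simp add: sum_nonneg)
qed

lemma hs_self_diff: "hs d (\<lambda>k l. A k l - B k l) (\<lambda>k l. A k l - B k l) = hs d A A - 2 * hs d A B + hs d B B"
proof -
  have "hs d (\<lambda>k l. A k l - B k l) (\<lambda>k l. A k l - B k l) = hs d A (\<lambda>k l. A k l - B k l) - hs d B (\<lambda>k l. A k l - B k l)"
    by (rule hs_diff_left)
  also have "hs d A (\<lambda>k l. A k l - B k l) = hs d A A - hs d A B"
    using hs_sym hs_diff_left by metis
  also have "hs d B (\<lambda>k l. A k l - B k l) = hs d B A - hs d B B"
    using hs_sym hs_diff_left by metis
  finally show ?thesis using hs_sym[of d B A] by simp
qed

definition Qm :: "(nat \<Rightarrow> complex) \<Rightarrow> nat \<Rightarrow> nat \<Rightarrow> complex" where "Qm b = (\<lambda>k l. b k * cnj (b l))"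
definition Idm :: "nat \<Rightarrow> nat \<Rightarrow> complex" where "Idm = (\<lambda>k l. if k = l then 1 else 0)"

lemma hs_Q_rho: "hs d (Qm b) \<rho> = Re (cinner d b (op_apply d \<rho> b))"
  unfolding hs_def Qm_def cinner_def op_apply_def by (simp add: sum_distrib_left mult_ac)

lemma hs_Q_Q: "hs d (Qm b) (Qm c) = (cmod (cinner d b c))\<^sup>2"
proof -
  have "(\<Sum>k<d. \<Sum>l<d. cnj (Qm b k l) * Qm c k l) = cinner d b c * cnj (cinner d b c)"
    unfolding Qm_def cinner_def apply (simp add: sum_product mult_ac) apply (subst sum.swap) by (simp add: mult_ac)
  moreover have "Re (cinner d b c * cnj (cinner d b c)) = (cmod (cinner d b c))\<^sup>2"
    by (metis Re_complex_of_real complex_norm_square of_real_power)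
  ultimately show ?thesis unfolding hs_def by simp
qed

lemma hs_Q_Id: "hs d (Qm b) Idm = Re (cinner d b b)"
  unfolding hs_def Qm_def cinner_def Idm_def by (simp add: if_distrib cong: if_cong)

lemma hs_Id_Id: "hs d Idm Idm = real d"
  unfolding hs_def Idm_def by (simp add: if_distrib cong: if_cong)

lemma hs_Id_rho: "hs d Idm \<rho> = Re (\<Sum>k<d. \<rho> k k)"
proof -
  have "(\<Sum>k<d. \<Sum>l<d. cnj (Idm k l) * \<rho> k l) = (\<Sum>k<d. \<rho> k k)"
  proof (rule sum.cong[OF refl])
    fix k assume k: "k \<in> {..<d}"
    have "(\<Sum>l<d. cnj (Idm k l) * \<rho> k l) = (\<Sum>l<d. if k = l then \<rho> k l else 0)"
      by (rule sum.cong) (auto simp: Idm_def)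
    also have "\<dots> = \<rho> k k" using k by simp
    finally show "(\<Sum>l<d. cnj (Idm k l) * \<rho> k l) = \<rho> k k" .
  qed
  then show ?thesis unfolding hs_def by simp
qed

lemma hs_four: "hs d (\<lambda>k l. A k l - complex_of_real r * I k l) (\<lambda>k l. C k l - complex_of_real s * J k l)
   = hs d A C - s * hs d A J - r * hs d I C + r * s * hs d I J"
proof -
  have 1: "hs d (\<lambda>k l. A k l - complex_of_real r * I k l) Z = hs d A Z - r * hs d I Z" for Z
    using hs_diff_left[of d A "\<lambda>k l. complex_of_real r * I k l" Z] hs_scale_left[of d r I Z] by simp
  have 2: "hs d A (\<lambda>k l. C k l - complex_of_real s * J k l) = hs d A C - s * hs d A J" for A
    using 1[of ] hs_sym hs_diff_left hs_scale_left by metis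
  show ?thesis using 1[of "\<lambda>k l. C k l - complex_of_real s * J k l"] 2[of A] 2[of I] by (simp add: algebra_simps)
qed

lemma sum_delta_r: "(k::nat) < d \<Longrightarrow> (\<Sum>j<d. f j * (if j = k then A else 0)) = f k * (A::complex)"
proof -
  assume k: "k < d"
  have "(\<Sum>j<d. f j * (if j = k then A else 0)) = (\<Sum>j<d. if k = j then f k * A else 0)"
    by (rule sum.cong) auto
  also have "\<dots> = f k * A" using k by (subst sum.delta') auto
  finally show ?thesis .
qed

lemma sum_delta_l: "(k::nat) < d \<Longrightarrow> (\<Sum>j<d. cnj (if j = k then A else 0) * f j) = cnj A * (f k :: complex)"
proof -
  assume k: "k < d"
  have "(\<Sum>j<d. cnj (if j = k then A else 0) * f j) = (\<Sum>j<d. if k = j then cnj A * f k else 0)"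
    by (rule sum.cong) auto
  also have "\<dots> = cnj A * f k" using k by (subst sum.delta') auto
  finally show ?thesis .
qed

lemma quad_two:
  assumes "k < d" "l < d"
  shows "cinner d (\<lambda>j. (if j = k then A else 0) + (if j = l then C else 0))
           (op_apply d \<rho> (\<lambda>j. (if j = k then A else 0) + (if j = l then C else 0)))
       = cnj A * (\<rho> k k * A + \<rho> k l * C) + cnj C * (\<rho> l k * A + \<rho> l l * C)"
proof -
  define v where "v = (\<lambda>j::nat. (if j = k then A else 0) + (if j = l then C else 0))"
  have w: "op_apply d \<rho> v = (\<lambda>j. \<rho> j k * A + \<rho> j l * C)"
    unfolding op_apply_def v_def using assms
    by (simp add: distrib_left sum.distrib sum_delta_r)
  have "cinner d v (op_apply d \<rho> v) = cnj A * (\<rho> k k * A + \<rho> k l * C) + cnj C * (\<rho> l k * A + \<rho> l l * C)"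
    unfolding cinner_def w unfolding v_def using assms
    by (simp only: complex_cnj_add distrib_right sum.distrib sum_delta_l)
  then show ?thesis unfolding v_def .
qed

lemma discr: fixes a b c :: real
  assumes "a \<ge> 0" "\<And>t. a * t^2 - 2 * b * t + c \<ge> 0"
  shows "b^2 \<le> a * c"
proof (cases "a = 0")
  case True
  have "b = 0"
  proof (rule ccontr)
    assume "b \<noteq> 0"
    have "a * ((c + 1) / (2 * b))^2 - 2 * b * ((c + 1) / (2 * b)) + c \<ge> 0" by (rule assms(2))
    moreover have "2 * b * ((c + 1) / (2 * b)) = c + 1" using \<open>b \<noteq> 0\<close> by simp
    ultimately show False using True by simp
  qed
  then show ?thesis using True by simp
next
  case False
  then have ap: "a > 0" using assms(1) by simp
  have "a * (b / a)^2 - 2 * b * (b / a) + c \<ge> 0" by (rule assms(2))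
  then have "c - b^2 / a \<ge> 0" using ap by (simp add: field_simps power2_eq_square)
  then show ?thesis using ap by (simp add: field_simps)
qed

lemma density_diag:
  assumes "density_operator d \<rho>" "k < d"
  shows "Re (\<rho> k k) \<ge> 0" "Im (\<rho> k k) = 0"
proof -
  have "0 \<le> Re (cinner d (\<lambda>j. (if j = k then 1 else 0) + (if j = k then 0 else 0))
           (op_apply d \<rho> (\<lambda>j. (if j = k then 1 else 0) + (if j = k then 0 else 0))))"
    using assms(1) unfolding density_operator_def by blast
  then show "Re (\<rho> k k) \<ge> 0" using quad_two[OF assms(2) assms(2), of 1 0 \<rho>] by simp
  have "\<rho> k k = cnj (\<rho> k k)" using assms unfolding density_operator_def by blast
  then have "Im (\<rho> k k) = Im (cnj (\<rho> k k))" by (rule arg_cong)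
  then show "Im (\<rho> k k) = 0" by simp
qed

lemma density_offdiag:
  assumes "density_operator d \<rho>" "k < d" "l < d"
  shows "(cmod (\<rho> k l))\<^sup>2 \<le> Re (\<rho> k k) * Re (\<rho> l l)"
proof (cases "k = l")
  case True
  have "(cmod (\<rho> k k))\<^sup>2 = (Re (\<rho> k k))\<^sup>2"
    using density_diag[OF assms(1) assms(2)] by (simp add: cmod_power2)
  then show ?thesis using True by (simp add: power2_eq_square)
next
  case False
  let ?r = "\<rho> k l"
  have herm: "\<rho> l k = cnj ?r" using assms unfolding density_operator_def by blast
  have q: "\<And>t::real. Re (\<rho> k k) * t^2 - 2 * (cmod ?r)^2 * t + (cmod ?r)^2 * Re (\<rho> l l) \<ge> 0"
  proof -
    fix t :: real
    have cm: "cmod ?r * cmod ?r = Re ?r * Re ?r + Im ?r * Im ?r"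
      using cmod_power2[of ?r] by (simp add: power2_eq_square)
    have "0 \<le> Re (cinner d (\<lambda>j. (if j = k then complex_of_real t else 0) + (if j = l then - cnj ?r else 0))
           (op_apply d \<rho> (\<lambda>j. (if j = k then complex_of_real t else 0) + (if j = l then - cnj ?r else 0))))"
      using assms(1) unfolding density_operator_def by blast
    also have "\<dots> = Re (\<rho> k k) * t^2 - 2 * (cmod ?r)^2 * t + (cmod ?r)^2 * Re (\<rho> l l)"
      unfolding quad_two[OF assms(2,3)] herm using cm density_diag(2)[OF assms(1,2)] density_diag(2)[OF assms(1,3)]
      by (simp add: algebra_simps cmod_power2 power2_eq_square)
    finally show "Re (\<rho> k k) * t^2 - 2 * (cmod ?r)^2 * t + (cmod ?r)^2 * Re (\<rho> l l) \<ge> 0" .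
  qed
  have "((cmod ?r)^2)^2 \<le> Re (\<rho> k k) * ((cmod ?r)^2 * Re (\<rho> l l))"
    by (rule discr[OF density_diag(1)[OF assms(1,2)] q])
  then have "(cmod ?r)^2 * (cmod ?r)^2 \<le> (cmod ?r)^2 * (Re (\<rho> k k) * Re (\<rho> l l))"
    by (simp add: power2_eq_square mult_ac)
  moreover have "0 \<le> Re (\<rho> k k) * Re (\<rho> l l)"
    using density_diag(1)[OF assms(1,2)] density_diag(1)[OF assms(1,3)] by simp
  ultimately show ?thesis
  proof (cases "cmod ?r = 0")
    case False
    then have "(cmod ?r)^2 > 0" by simp
    then show ?thesis using \<open>(cmod ?r)^2 * (cmod ?r)^2 \<le> (cmod ?r)^2 * (Re (\<rho> k k) * Re (\<rho> l l))\<close>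
      using mult_le_cancel_left_pos[OF \<open>(cmod ?r)^2 > 0\<close>] by blast
  qed simp
qed

lemma hs_rho_le1:
  assumes "density_operator d \<rho>"
  shows "hs d \<rho> \<rho> \<le> 1"
proof -
  have "hs d \<rho> \<rho> = (\<Sum>k<d. \<Sum>l<d. (cmod (\<rho> k l))\<^sup>2)"
  proof -
    have "(\<Sum>k<d. \<Sum>l<d. cnj (\<rho> k l) * \<rho> k l) = complex_of_real (\<Sum>k<d. \<Sum>l<d. (cmod (\<rho> k l))\<^sup>2)"
      by (simp add: complex_norm_square mult.commute del: of_real_power)
    then show ?thesis unfolding hs_def by simp
  qed
  also have "\<dots> \<le> (\<Sum>k<d. \<Sum>l<d. Re (\<rho> k k) * Re (\<rho> l l))"
    using density_offdiag[OF assms] by (intro sum_mono) auto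
  also have "\<dots> = (\<Sum>k<d. Re (\<rho> k k)) * (\<Sum>l<d. Re (\<rho> l l))"
    by (simp add: sum_product)
  also have "(\<Sum>k<d. Re (\<rho> k k)) = 1"
    using assms unfolding density_operator_def by (metis Re_sum one_complex.sel)
  finally show ?thesis by simp
qed

lemma mub_bound:
  assumes d1: "d \<ge> 1" and rho: "density_operator d \<rho>" and mub: "mutually_unbiased d M B"
    and p: "\<And>m i. p m i = Re (cinner d (B m i) (op_apply d \<rho> (B m i)))"
  shows "(\<Sum>m<M. \<Sum>i<d. (p m i)\<^sup>2) \<le> (real d + real M - 1) / real d"
proof -
  define r where "r = 1 / real d"
  have dpos: "real d > 0" using d1 by simp
  have rd: "r * real d = 1" unfolding r_def using dpos by simp
  have rrd: "r * r * real d = r" using rd by (simp add: mult.assoc)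
  define E where "E m i = (\<lambda>k l. Qm (B m i) k l - complex_of_real r * Idm k l)" for m i
  define X where "X = (\<lambda>k l. \<rho> k l - complex_of_real r * Idm k l)"
  define c where "c m i = p m i - r" for m i
  define Y where "Y = (\<lambda>k l. \<Sum>m<M. \<Sum>i<d. complex_of_real (c m i) * E m i k l)"
  have onb: "\<And>m. m < M \<Longrightarrow> orthonormal_basis d (B m)" using mub unfolding mutually_unbiased_def by blast
  have psum: "\<And>m. m < M \<Longrightarrow> (\<Sum>i<d. p m i) = 1" using p_sum[OF rho onb] p by simp
  have csum: "\<And>m. m < M \<Longrightarrow> (\<Sum>i<d. c m i) = 0"
    unfolding c_def using psum rd by (simp add: sum_subtractf mult.commute)
  have tr: "(\<Sum>k<d. \<rho> k k) = 1" using rho unfolding density_operator_def by blast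
  have trace: "hs d Idm \<rho> = 1" unfolding hs_Id_rho tr by simp
  have QI: "\<And>m i. m < M \<Longrightarrow> i < d \<Longrightarrow> hs d (Qm (B m i)) Idm = 1"
    using onb unfolding hs_Q_Id orthonormal_basis_def by simp
  have EX: "hs d (E m i) X = c m i" if "m < M" "i < d" for m i
  proof -
    have "hs d (E m i) X = hs d (Qm (B m i)) \<rho> - r * hs d (Qm (B m i)) Idm - r * hs d Idm \<rho> + r * r * hs d Idm Idm"
      unfolding E_def X_def by (rule hs_four)
    also have "\<dots> = p m i - r" using QI[OF that] trace rrd by (simp add: hs_Q_rho p hs_Id_Id)
    finally show ?thesis unfolding c_def .
  qed
  have EE: "hs d (E n j) (E m i) = (if n = m \<and> j = i then 1 else 0) - (if n = m then r else 0)"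
    if "m < M" "i < d" "n < M" "j < d" for m i n j
  proof -
    have "hs d (E n j) (E m i) = hs d (Qm (B n j)) (Qm (B m i)) - r * hs d (Qm (B n j)) Idm - r * hs d Idm (Qm (B m i)) + r * r * hs d Idm Idm"
      unfolding E_def by (rule hs_four)
    also have "\<dots> = hs d (Qm (B n j)) (Qm (B m i)) - r"
      using QI[of n j] QI[of m i] that hs_sym[of d Idm "Qm (B m i)"] rrd by (simp add: hs_Id_Id)
    also have "hs d (Qm (B n j)) (Qm (B m i)) = (if n = m then (if j = i then 1 else 0) else r)"
    proof (cases "n = m")
      case True
      then show ?thesis using onb[OF that(1)] that unfolding hs_Q_Q orthonormal_basis_def by auto
    next
      case False
      then show ?thesis using mub that unfolding hs_Q_Q mutually_unbiased_def r_def by auto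
    qed
    finally show ?thesis by auto
  qed
  have hsY: "hs d Y Z = (\<Sum>m<M. \<Sum>i<d. c m i * hs d (E m i) Z)" for Z
    unfolding Y_def by (simp add: hs_sum_left hs_scale_left)
  have YX: "hs d Y X = (\<Sum>m<M. \<Sum>i<d. (c m i)\<^sup>2)"
    unfolding hsY using EX by (simp add: power2_eq_square)
  have EY: "hs d (E m i) Y = c m i" if "m < M" "i < d" for m i
  proof -
    have "hs d (E m i) Y = (\<Sum>n<M. \<Sum>j<d. c n j * hs d (E n j) (E m i))"
      using hs_sym hsY by metis
    also have "\<dots> = (\<Sum>n<M. if n = m then c m i else 0)"
    proof (rule sum.cong[OF refl])
      fix n assume n: "n \<in> {..<M}"
      show "(\<Sum>j<d. c n j * hs d (E n j) (E m i)) = (if n = m then c m i else 0)"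
      proof (cases "n = m")
        case True
        have "(\<Sum>j<d. c n j * hs d (E n j) (E m i)) = (\<Sum>j<d. (if j = i then c m j else 0) - r * c m j)"
        proof (rule sum.cong[OF refl])
          fix j assume j: "j \<in> {..<d}"
          have h: "hs d (E m j) (E m i) = (if j = i then 1 else 0) - r" using EE[of m i m j] that j by simp
          show "c n j * hs d (E n j) (E m i) = (if j = i then c m j else 0) - r * c m j"
            unfolding True h by (simp add: algebra_simps)
        qed
        also have "\<dots> = c m i - r * (\<Sum>j<d. c m j)"
          using that by (simp add: sum_subtractf sum_distrib_left)
        also have "\<dots> = c m i" using csum that by simp
        finally show ?thesis using True by simp
      next
        case False
        then show ?thesis using EE that n by simp
      qed
    qed
    also have "\<dots> = c m i" using that by simp
    finally show ?thesis .
  qed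
  have YY: "hs d Y Y = (\<Sum>m<M. \<Sum>i<d. (c m i)\<^sup>2)"
    unfolding hsY[of Y] using EY by (simp add: power2_eq_square)
  have XX: "hs d X X = hs d \<rho> \<rho> - r"
  proof -
    have "hs d X X = hs d \<rho> \<rho> - r * hs d \<rho> Idm - r * hs d Idm \<rho> + r * r * hs d Idm Idm"
      unfolding X_def by (rule hs_four)
    then show ?thesis using trace hs_sym[of d \<rho> Idm] rrd by (simp add: hs_Id_Id)
  qed
  have "0 \<le> hs d (\<lambda>k l. X k l - Y k l) (\<lambda>k l. X k l - Y k l)" by (rule hs_self_nonneg)
  also have "\<dots> = hs d X X - 2 * hs d X Y + hs d Y Y" by (rule hs_self_diff)
  finally have S: "(\<Sum>m<M. \<Sum>i<d. (c m i)\<^sup>2) \<le> hs d \<rho> \<rho> - r"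
    using XX YY YX hs_sym[of d X Y] by simp
  have "(\<Sum>m<M. \<Sum>i<d. (c m i)\<^sup>2) = (\<Sum>m<M. (\<Sum>i<d. (p m i)\<^sup>2) - r)"
  proof (rule sum.cong[OF refl])
    fix m assume m: "m \<in> {..<M}"
    have "(\<Sum>i<d. (c m i)\<^sup>2) = (\<Sum>i<d. (p m i)\<^sup>2 - 2 * r * p m i + r * r)"
      unfolding c_def by (simp add: power2_eq_square algebra_simps)
    also have "\<dots> = (\<Sum>i<d. (p m i)\<^sup>2) - 2 * r * (\<Sum>i<d. p m i) + real d * (r * r)"
      by (simp add: sum.distrib sum_subtractf sum_distrib_left)
    also have "\<dots> = (\<Sum>i<d. (p m i)\<^sup>2) - r" using psum m rrd by (simp add: mult.commute)
    finally show "(\<Sum>i<d. (c m i)\<^sup>2) = (\<Sum>i<d. (p m i)\<^sup>2) - r" .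
  qed
  also have "\<dots> = (\<Sum>m<M. \<Sum>i<d. (p m i)\<^sup>2) - real M * r" by (simp add: sum_subtractf)
  finally have "(\<Sum>m<M. \<Sum>i<d. (p m i)\<^sup>2) \<le> hs d \<rho> \<rho> - r + real M * r" using S by simp
  also have "\<dots> \<le> 1 - r + real M * r" using hs_rho_le1[OF rho] by simp
  also have "\<dots> = (real d + real M - 1) / real d" unfolding r_def using dpos by (simp add: field_simps)
  finally show ?thesis .
qed


lemma entropy_lb:
  fixes p :: "nat \<Rightarrow> real" and K :: nat
  assumes K1: "K \<ge> 1" and nn: "\<forall>i<d. p i \<ge> 0" and s1: "(\<Sum>i<d. p i) = 1"
  shows "shannon_entropy d p \<ge> (al K + be K * (\<Sum>i<d. (p i)\<^sup>2)) / ln 2"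
proof -
  define S where "S = {i \<in> {..<d}. p i \<noteq> 0}"
  define Q where "Q = image_mset p (mset_set S)"
  have fS: "finite S" unfolding S_def by simp
  have conv: "(\<Sum>i\<in>S. f (p i)) = (\<Sum>i<d. f (p i))" if "f 0 = 0" for f :: "real \<Rightarrow> real"
    unfolding S_def sum.inter_filter[OF finite_lessThan] using that by (intro sum.cong) auto
  have Qpos: "\<forall>x\<in>#Q. x > 0" unfolding Q_def S_def using nn by (auto simp: less_le)
  have sQ: "sum_mset Q = 1"
    unfolding Q_def using conv[of "\<lambda>x. x"] s1 by (simp add: sum_unfold_sum_mset[symmetric])
  have "sum_mset (image_mset (ph K) Q) \<ge> 0" by (rule main_mset[OF K1 Qpos sQ])
  also have "sum_mset (image_mset (ph K) Q) = (\<Sum>i\<in>S. ph K (p i))"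
    unfolding Q_def by (simp add: sum_unfold_sum_mset image_mset.compositionality comp_def)
  also have "\<dots> = (\<Sum>i<d. ph K (p i))" by (rule conv) (simp add: ph_def)
  also have "\<dots> = (\<Sum>i<d. - p i * ln (p i)) - al K * (\<Sum>i<d. p i) - be K * (\<Sum>i<d. (p i)\<^sup>2)"
    unfolding ph_def by (simp add: sum_subtractf sum_distrib_left)
  finally have ineq: "(\<Sum>i<d. - p i * ln (p i)) \<ge> al K + be K * (\<Sum>i<d. (p i)\<^sup>2)" using s1 by simp
  have "shannon_entropy d p = (\<Sum>i<d. - p i * ln (p i) / ln 2)"
    unfolding shannon_entropy_def log_def sum_negf[symmetric] by (intro sum.cong) auto
  also have "\<dots> = (\<Sum>i<d. - p i * ln (p i)) / ln 2" by (simp add: sum_divide_distrib)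
  finally have "shannon_entropy d p = (\<Sum>i<d. - p i * ln (p i)) / ln 2" .
  then show ?thesis using ineq by (simp add: divide_right_mono)
qed

theorem proposition2:
  fixes d M K :: nat and \<rho> :: "nat \<Rightarrow> nat \<Rightarrow> complex"
    and B :: "nat \<Rightarrow> nat \<Rightarrow> nat \<Rightarrow> complex"
    and p :: "nat \<Rightarrow> nat \<Rightarrow> real" and a :: real
  assumes "d \<ge> 2" and "M \<ge> 1"
    and "density_operator d \<rho>"
    and "mutually_unbiased d M B"
    and "\<And>m i. p m i = Re (cinner d (B m i) (op_apply d \<rho> (B m i)))"
    and "K = nat \<lfloor>real M * real d / (real d + real M - 1)\<rfloor>"
    and "a = real M * real d / (real d + real M - 1) - real K"
  shows "(\<Sum>m<M. shannon_entropy d (p m)) \<ge>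
           (a * (real K + 1) * log 2 (real K + 1) + (1 - a) * real K * log 2 (real K))
             * (real d + real M - 1) / real d
       \<and> (a * (real K + 1) * log 2 (real K + 1) + (1 - a) * real K * log 2 (real K))
             * (real d + real M - 1) / real d
         = real M * log 2 (real K)
           + (real K + 1) * (real M - real K * (real d + real M - 1) / real d)
             * log 2 (1 + 1 / real K)"
proof -
  note d2 = assms(1) and M1 = assms(2) and rho = assms(3) and mub = assms(4) and pdef = assms(5)
    and Kdef = assms(6) and adef = assms(7)
  define s where "s = (real d + real M - 1) / real d"
  define t where "t = real M * real d / (real d + real M - 1)"
  have dpos: "real d > 0" using d2 by simp
  have den: "real d + real M - 1 > 0" using d2 by simp
  have Mts: "real M = t * s"
  proof -
    have "t * s = real M * (real d / real d) * ((real d + real M - 1) / (real d + real M - 1))"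
      unfolding t_def s_def by (simp add: mult_ac)
    also have "\<dots> = real M" using dpos den by simp
    finally show ?thesis by simp
  qed
  have t1: "t \<ge> 1"
  proof -
    have "real M * real d - (real d + real M - 1) = (real M - 1) * (real d - 1)" by (simp add: algebra_simps)
    also have "\<dots> \<ge> 0" using d2 M1 by simp
    finally show ?thesis unfolding t_def using den by (simp add: field_simps)
  qed
  have K1: "K \<ge> 1"
  proof -
    have "\<lfloor>t\<rfloor> \<ge> 1" using t1 by (simp add: le_floor_iff)
    then show ?thesis using Kdef t_def by linarith
  qed
  have Kp: "real K > 0" using K1 by simp
  have aK: "a = t - real K" using adef t_def by simp
  have onb: "\<And>m. m < M \<Longrightarrow> orthonormal_basis d (B m)" using mub unfolding mutually_unbiased_def by blast
  have nn: "\<And>m i. m < M \<Longrightarrow> i < d \<Longrightarrow> p m i \<ge> 0"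
    using rho pdef unfolding density_operator_def by simp
  have ps: "\<And>m. m < M \<Longrightarrow> (\<Sum>i<d. p m i) = 1" using p_sum[OF rho onb] pdef by simp
  have W: "(\<Sum>m<M. \<Sum>i<d. (p m i)\<^sup>2) \<le> s"
    unfolding s_def by (rule mub_bound) (use d2 rho mub pdef in auto)
  have "(\<Sum>m<M. shannon_entropy d (p m)) \<ge> (\<Sum>m<M. (al K + be K * (\<Sum>i<d. (p m i)\<^sup>2)) / ln 2)"
    using entropy_lb[OF K1] nn ps by (intro sum_mono) auto
  also have "(\<Sum>m<M. (al K + be K * (\<Sum>i<d. (p m i)\<^sup>2)) / ln 2)
      = (real M * al K + be K * (\<Sum>m<M. \<Sum>i<d. (p m i)\<^sup>2)) / ln 2"
    by (simp add: sum_divide_distrib[symmetric] sum.distrib sum_distrib_left)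
  also have "\<dots> \<ge> (real M * al K + be K * s) / ln 2"
    using W be_neg[OF K1] by (intro divide_right_mono) (auto simp: mult_left_mono_neg)
  finally have main: "(\<Sum>m<M. shannon_entropy d (p m)) \<ge> (real M * al K + be K * s) / ln 2" .
  define l0 where "l0 = ln (real K)"
  define l1 where "l1 = ln (real K + 1)"
  have e1: "(a * (real K + 1) * log 2 (real K + 1) + (1 - a) * real K * log 2 (real K))
             * (real d + real M - 1) / real d = (real M * al K + be K * s) / ln 2"
  proof -
    have "(a * (real K + 1) * log 2 (real K + 1) + (1 - a) * real K * log 2 (real K))
             * (real d + real M - 1) / real d
        = (a * (real K + 1) * l1 + (1 - a) * real K * l0) * s / ln 2"
    proof -
      have lg: "log 2 (real K + 1) = l1 / ln 2" "log 2 (real K) = l0 / ln 2"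
        unfolding log_def l0_def l1_def by simp_all
      have "ln (2::real) \<noteq> 0" by simp
      then show ?thesis unfolding s_def lg using dpos by (simp add: field_simps)
    qed
    also have "\<dots> = (real M * al K + be K * s) / ln 2"
      unfolding Mts aK al_def be_def Lk_def l0_def[symmetric] l1_def[symmetric]
      by (simp add: algebra_simps)
    finally show ?thesis .
  qed
  have e2: "real M * log 2 (real K)
           + (real K + 1) * (real M - real K * (real d + real M - 1) / real d)
             * log 2 (1 + 1 / real K) = (real M * al K + be K * s) / ln 2"
  proof -
    have "ln (1 + 1 / real K) = l1 - l0"
    proof -
      have "1 + 1 / real K = (real K + 1) / real K" using Kp by (simp add: field_simps)
      then show ?thesis unfolding l0_def l1_def using Kp by (simp add: ln_div)
    qed
    then have lg: "log 2 (1 + 1 / real K) = (l1 - l0) / ln 2" "log 2 (real K) = l0 / ln 2"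
      unfolding log_def l0_def by simp_all
    have "ln (2::real) \<noteq> 0" by simp
    then have "real M * log 2 (real K)
           + (real K + 1) * (real M - real K * (real d + real M - 1) / real d)
             * log 2 (1 + 1 / real K) = (real M * l0 + (real K + 1) * (real M - real K * s) * (l1 - l0)) / ln 2"
      unfolding lg s_def using dpos by (simp add: field_simps)
    also have "\<dots> = (real M * al K + be K * s) / ln 2"
      unfolding Mts al_def be_def Lk_def l0_def[symmetric] l1_def[symmetric]
      by (simp add: algebra_simps)
    finally show ?thesis .
  qed
  show ?thesis using main e1 e2 by simp
qed

end
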